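(* Let $\mathbb{K}$ be a field of characteristic zero and let $\mathbb{D}=\{\nabla^{a(1)}_{i(1)},\ldots,\nabla^{a(m)}_{i(m)}\}$ be a finite set of homogeneous locally nilpotent derivations of $\mathbb{K}[x_1,\ldots,x_n]$ (defined below). Let $\mathbb{D}'\subseteq\mathbb{D}$ be the set of those derivations whose vertices in the graph $\Gamma(\mathbb{D})$ lie on some oriented cycle, and $\mathbb{D}''=\mathbb{D}\setminus\mathbb{D}'$. Assume that all derivations in $\mathbb{D}'$ have weight zero. Let $D_1\in\mathbb{D}'$, $D_2\in\mathbb{D}''$ and $D:=[D_1,D_2]$. Then either $D=0$, or $D$ is (a nonzero scalar multiple of) a derivation of the form $\nabla^b_j$ and the vertex corresponding to $D$ in the graph $\Gamma(\mathbb{D}\cup\{D\})$ is not contained in any oriented cycle.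
   Context: $\partial_i=\partial/\partial x_i$. For $1\le i\le n$ and $a\in\mathbb{Z}^n_{\ge0}$ with $a_i=0$, $\nabla^a_i:=x_1^{a_1}\cdots x_{i-1}^{a_{i-1}}x_{i+1}^{a_{i+1}}\cdots x_n^{a_n}\partial_i$; its weight is $\sum_ja_j-1$ (so weight zero derivations are $x_j\partial_i$ with $j\neq i$). For a finite set $\mathbb{D}=\{\nabla^{a(1)}_{i(1)},\ldots,\nabla^{a(m)}_{i(m)}\}$, the directed graph $\Gamma(\mathbb{D})$ has vertices $1,\ldots,m$ (vertex $s$ corresponding to $\nabla^{a(s)}_{i(s)}$), and $(s,j)$ is an edge if and only if the $i(s)$-th coordinate of $a(j)$ is positive. $[D_1,D_2]=D_1\circ D_2-D_2\circ D_1$. *)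

theory Defs
  imports "HOL-Library.Poly_Mapping"
begin

type_synonym 'a mpoly = "(nat \<Rightarrow>\<^sub>0 nat) \<Rightarrow>\<^sub>0 'a"

definition in_vars :: "nat \<Rightarrow> ('a::zero) mpoly \<Rightarrow> bool" where
  "in_vars n p \<longleftrightarrow> (\<forall>m::nat \<Rightarrow>\<^sub>0 nat. m \<in> Poly_Mapping.keys p \<longrightarrow> Poly_Mapping.keys m \<subseteq> {1..n})"

definition mpd :: "nat \<Rightarrow> ('a::comm_ring_1) mpoly \<Rightarrow> 'a mpoly" where
  "mpd i p = (\<Sum>m\<in>Poly_Mapping.keys p. if Poly_Mapping.lookup m i > 0
       then Poly_Mapping.single (m - Poly_Mapping.single i 1) (of_nat (Poly_Mapping.lookup m i) * Poly_Mapping.lookup p m)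
       else 0)"

text \<open>A derivation nabla^a_i is encoded by the pair (a, i).\<close>
definition nabla :: "(nat \<Rightarrow>\<^sub>0 nat) \<times> nat \<Rightarrow> ('a::comm_ring_1) mpoly \<Rightarrow> 'a mpoly" where
  "nabla d p = Poly_Mapping.single (fst d) 1 * mpd (snd d) p"

definition valid_nabla :: "nat \<Rightarrow> (nat \<Rightarrow>\<^sub>0 nat) \<times> nat \<Rightarrow> bool" where
  "valid_nabla n d \<longleftrightarrow> snd d \<in> {1..n} \<and> Poly_Mapping.keys (fst d) \<subseteq> {1..n} \<and> Poly_Mapping.lookup (fst d) (snd d) = 0"

definition weight :: "(nat \<Rightarrow>\<^sub>0 nat) \<times> nat \<Rightarrow> int" where
  "weight d = int (\<Sum>j\<in>Poly_Mapping.keys (fst d). Poly_Mapping.lookup (fst d) j) - 1"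

definition gamma_edges :: "((nat \<Rightarrow>\<^sub>0 nat) \<times> nat) set \<Rightarrow> (((nat \<Rightarrow>\<^sub>0 nat) \<times> nat) \<times> ((nat \<Rightarrow>\<^sub>0 nat) \<times> nat)) set" where
  "gamma_edges DD = {(s, t). s \<in> DD \<and> t \<in> DD \<and> Poly_Mapping.lookup (fst t) (snd s) > 0}"

definition on_cycle :: "((nat \<Rightarrow>\<^sub>0 nat) \<times> nat) set \<Rightarrow> (nat \<Rightarrow>\<^sub>0 nat) \<times> nat \<Rightarrow> bool" where
  "on_cycle DD s \<longleftrightarrow> (s, s) \<in> (gamma_edges DD)\<^sup>+"

definition commutator :: "('b \<Rightarrow> 'b::ab_group_add) \<Rightarrow> ('b \<Rightarrow> 'b) \<Rightarrow> 'b \<Rightarrow> 'b" where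
  "commutator D1 D2 p = D1 (D2 p) - D2 (D1 p)"

end

theory Submission
  imports Defs
begin

definition additive :: "('b::ab_group_add \<Rightarrow> 'c::ab_group_add) \<Rightarrow> bool" where
  "additive L \<longleftrightarrow> (\<forall>p q. L (p + q) = L p + L q)"

lemma additive_zero: "additive L \<Longrightarrow> L 0 = 0"
  unfolding additive_def by (metis add_cancel_right_right add_0)

lemma additive_sum: assumes "additive L" "finite S" shows "L (sum f S) = (\<Sum>x\<in>S. L (f x))"
  using assms(2) by (induction S rule: finite_induct) (use assms in \<open>auto simp: additive_zero additive_def\<close>)

lemma mpoly_expand: "(p::('b::zero \<Rightarrow>\<^sub>0 'a::comm_monoid_add)) = (\<Sum>m\<in>Poly_Mapping.keys p. Poly_Mapping.single m (Poly_Mapping.lookup p m))"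
proof (rule poly_mapping_eqI)
  fix k
  have "Poly_Mapping.lookup (\<Sum>m\<in>Poly_Mapping.keys p. Poly_Mapping.single m (Poly_Mapping.lookup p m)) k
      = (\<Sum>m\<in>Poly_Mapping.keys p. (Poly_Mapping.lookup p m when m = k))"
    by (simp add: lookup_sum lookup_single)
  also have "\<dots> = Poly_Mapping.lookup p k"
    by (cases "k \<in> Poly_Mapping.keys p") (auto simp: when_def in_keys_iff)
  finally show "Poly_Mapping.lookup p k = Poly_Mapping.lookup (\<Sum>m\<in>Poly_Mapping.keys p. Poly_Mapping.single m (Poly_Mapping.lookup p m)) k" by simp
qed

lemma additive_ext:
  assumes "additive L1" "additive L2"
    and "\<And>m c. L1 (Poly_Mapping.single m c) = L2 (Poly_Mapping.single m c)"
  shows "L1 p = L2 (p::('b::zero \<Rightarrow>\<^sub>0 'a::ab_group_add))"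
proof -
  have "L1 p = L1 (\<Sum>m\<in>Poly_Mapping.keys p. Poly_Mapping.single m (Poly_Mapping.lookup p m))"
    by (subst mpoly_expand) simp
  also have "\<dots> = (\<Sum>m\<in>Poly_Mapping.keys p. L1 (Poly_Mapping.single m (Poly_Mapping.lookup p m)))"
    by (simp add: additive_sum assms)
  also have "\<dots> = (\<Sum>m\<in>Poly_Mapping.keys p. L2 (Poly_Mapping.single m (Poly_Mapping.lookup p m)))"
    using assms(3) by simp
  also have "\<dots> = L2 (\<Sum>m\<in>Poly_Mapping.keys p. Poly_Mapping.single m (Poly_Mapping.lookup p m))"
    by (simp add: additive_sum assms)
  also have "\<dots> = L2 p" by (subst (2) mpoly_expand) simp
  finally show ?thesis .
qed

definition gterm :: "nat \<Rightarrow> (nat \<Rightarrow>\<^sub>0 nat) \<Rightarrow> 'a::comm_ring_1 \<Rightarrow> 'a mpoly" where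
  "gterm i m c = (if Poly_Mapping.lookup m i > 0
       then Poly_Mapping.single (m - Poly_Mapping.single i 1) (of_nat (Poly_Mapping.lookup m i) * c)
       else 0)"

lemma mpd_sum: "finite S \<Longrightarrow> Poly_Mapping.keys p \<subseteq> S \<Longrightarrow>
   mpd i p = (\<Sum>m\<in>S. gterm i m (Poly_Mapping.lookup p m))"
  unfolding mpd_def gterm_def
  by (rule sum.mono_neutral_left) (auto simp: in_keys_iff)

lemma mpd_additive: "additive (mpd i :: ('a::comm_ring_1) mpoly \<Rightarrow> _)"
  unfolding additive_def
proof (intro allI)
  fix p q :: "'a mpoly"
  let ?S = "Poly_Mapping.keys p \<union> Poly_Mapping.keys q"
  have "mpd i (p + q) = (\<Sum>m\<in>?S. gterm i m (Poly_Mapping.lookup (p+q) m))"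
    using keys_add[of p q] by (intro mpd_sum) auto
  also have "\<dots> = (\<Sum>m\<in>?S. gterm i m (Poly_Mapping.lookup p m) + gterm i m (Poly_Mapping.lookup q m))"
    by (intro sum.cong) (auto simp: gterm_def lookup_add distrib_left single_add)
  also have "\<dots> = mpd i p + mpd i q"
    by (simp add: sum.distrib mpd_sum[symmetric])
  finally show "mpd i (p + q) = mpd i p + mpd i q" .
qed

lemma mpd_single: "mpd i (Poly_Mapping.single m c) = gterm i m c"
  by (subst mpd_sum[of "{m}"]) (auto)

lemma nabla_additive: "additive (nabla d :: ('a::comm_ring_1) mpoly \<Rightarrow> _)"
  unfolding additive_def nabla_def by (simp add: mpd_additive[unfolded additive_def] distrib_left)

lemma nabla_single: "nabla (a, i) (Poly_Mapping.single m c) =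
   (if Poly_Mapping.lookup m i > 0
       then Poly_Mapping.single (a + (m - Poly_Mapping.single i 1)) (of_nat (Poly_Mapping.lookup m i) * c)
       else 0)"
  by (simp add: nabla_def mpd_single gterm_def mult_single)

lemma nabla_zero: "nabla d 0 = 0"
  using additive_zero[OF nabla_additive] .

lemma commutator_additive: "additive L1 \<Longrightarrow> additive L2 \<Longrightarrow> additive (commutator L1 L2)"
  unfolding additive_def commutator_def by simp

lemma lookup_map_mult: "Poly_Mapping.lookup (Poly_Mapping.map (\<lambda>x. (c::'a::ring) * x) p) k = c * Poly_Mapping.lookup p k"
  by (simp add: map.rep_eq when_def)

lemma map_additive: "additive (Poly_Mapping.map (\<lambda>x. (c::'a::ring) * x) :: ('b \<Rightarrow>\<^sub>0 'a) \<Rightarrow> _)"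
  unfolding additive_def
  by (auto intro!: poly_mapping_eqI simp: lookup_map_mult lookup_add distrib_left)

lemma zero_additive: "additive (\<lambda>_. 0)" unfolding additive_def by simp

lemma comm_zero:
  assumes "k \<noteq> j" "Poly_Mapping.lookup b i = 0" "Poly_Mapping.lookup b j = 0" "k \<noteq> i"
  shows "commutator (nabla (Poly_Mapping.single k 1, i)) (nabla (b, j)) (Poly_Mapping.single m c) = (0::'a::comm_ring_1 mpoly)"
  using assms
  apply (simp add: commutator_def nabla_single nabla_zero lookup_add lookup_minus lookup_single when_def)
  apply (intro conjI impI; rule arg_cong2[where f=Poly_Mapping.single]; (rule poly_mapping_eqI)?)
  apply (auto simp: lookup_add lookup_minus lookup_single when_def algebra_simps)
  done

lemma map0: "Poly_Mapping.map f 0 = 0"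
  by (rule poly_mapping_eqI) (simp add: map.rep_eq when_def)

lemma single_diff_eq: "E1 = E3 \<Longrightarrow> E2 = E3 \<Longrightarrow> v1 - v2 = v3 \<Longrightarrow>
  Poly_Mapping.single E1 v1 - Poly_Mapping.single E2 v2 = Poly_Mapping.single E3 (v3::'a::ab_group_add)"
  by (simp add: single_diff[symmetric])

lemma single_eq: "E1 = E2 \<Longrightarrow> v1 = v2 \<Longrightarrow> Poly_Mapping.single E1 v1 = Poly_Mapping.single E2 v2"
  by simp

lemma comm_case3:
  assumes "k \<noteq> j" "i \<noteq> j" "k \<noteq> i" "Poly_Mapping.lookup b j = 0" "Poly_Mapping.lookup b i > 0"
  shows "commutator (nabla (Poly_Mapping.single k 1, i)) (nabla (b, j)) (Poly_Mapping.single m c) =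
     Poly_Mapping.map (\<lambda>x. of_nat (Poly_Mapping.lookup b i) * x) (nabla (b - Poly_Mapping.single i 1 + Poly_Mapping.single k 1, j) (Poly_Mapping.single m (c::'a::comm_ring_1)))"
  using assms
  apply (simp add: commutator_def nabla_single nabla_zero lookup_add lookup_minus lookup_single when_def map0 single_uminus[symmetric])
  apply (intro conjI impI; (rule single_diff_eq | rule single_eq); (rule poly_mapping_eqI)?)
  apply (auto simp: lookup_add lookup_minus lookup_single when_def algebra_simps)
  done

lemma comm_case4:
  assumes "i \<noteq> j" "Poly_Mapping.lookup b j = 0" "Poly_Mapping.lookup b i = 0"
  shows "commutator (nabla (Poly_Mapping.single j 1, i)) (nabla (b, j)) (Poly_Mapping.single m c) =
     Poly_Mapping.map (\<lambda>x. (-1) * x) (nabla (b, i) (Poly_Mapping.single m (c::'a::comm_ring_1)))"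
  using assms
  apply (simp add: commutator_def nabla_single nabla_zero lookup_add lookup_minus lookup_single when_def map0 single_uminus[symmetric])
  apply (intro conjI impI; (rule single_diff_eq | rule single_eq); (rule poly_mapping_eqI)?)
  apply (auto simp: lookup_add lookup_minus lookup_single when_def algebra_simps)
  done

lemma additive_comp: "additive f \<Longrightarrow> additive g \<Longrightarrow> additive (\<lambda>p. f (g p))"
  unfolding additive_def by simp

lemma gamma_iff: "(s,t) \<in> gamma_edges D \<longleftrightarrow> s \<in> D \<and> t \<in> D \<and> Poly_Mapping.lookup (fst t) (snd s) > 0"
  by (simp add: gamma_edges_def)

lemma cycle_transfer:
  assumes A: "\<And>s t. (s,t) \<in> gamma_edges (insert x DD) \<Longrightarrow> (po s, pi t) \<in> (gamma_edges DD)\<^sup>*"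
  and B: "\<And>t. (x,t) \<in> gamma_edges (insert x DD) \<Longrightarrow> (po x, pi t) \<in> (gamma_edges DD)\<^sup>+"
  and C: "\<And>v. (pi v, po v) \<in> (gamma_edges DD)\<^sup>*"
  and uv: "(u,v) \<in> (gamma_edges (insert x DD))\<^sup>+"
  shows "(po u, pi v) \<in> (gamma_edges DD)\<^sup>* \<and> (u = x \<longrightarrow> (po u, pi v) \<in> (gamma_edges DD)\<^sup>+)"
  using uv
proof (induction rule: trancl_induct)
  case (base y)
  then show ?case using A B by blast
next
  case (step y z)
  have yz: "(po y, pi z) \<in> (gamma_edges DD)\<^sup>*" using A step(2) by blast
  have c: "(pi y, po y) \<in> (gamma_edges DD)\<^sup>*" using C by blast
  have 1: "(po u, pi z) \<in> (gamma_edges DD)\<^sup>*"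
    using step(3) c yz by (meson rtrancl_trans)
  have 2: "u = x \<longrightarrow> (po u, pi z) \<in> (gamma_edges DD)\<^sup>+"
  proof
    assume "u = x"
    then have "(po u, pi y) \<in> (gamma_edges DD)\<^sup>+" using step(3) by blast
    moreover have "(pi y, pi z) \<in> (gamma_edges DD)\<^sup>*" using c yz by (meson rtrancl_trans)
    ultimately show "(po u, pi z) \<in> (gamma_edges DD)\<^sup>+" by (meson trancl_rtrancl_trancl)
  qed
  show ?case using 1 2 by blast
qed

lemma weight0_single:
  assumes "weight (a, i) = 0"
  obtains k where "a = Poly_Mapping.single k 1" "k \<in> Poly_Mapping.keys a"
proof -
  have S: "(\<Sum>j\<in>Poly_Mapping.keys a. Poly_Mapping.lookup a j) = 1"
    using assms unfolding weight_def by (simp del: of_nat_sum add: of_nat_sum[symmetric])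
  then have "Poly_Mapping.keys a \<noteq> {}" by auto
  then obtain k where k: "k \<in> Poly_Mapping.keys a" by blast
  have "(\<Sum>j\<in>Poly_Mapping.keys a. Poly_Mapping.lookup a j)
      = Poly_Mapping.lookup a k + (\<Sum>j\<in>Poly_Mapping.keys a - {k}. Poly_Mapping.lookup a j)"
    using k by (simp add: sum.remove)
  moreover have "Poly_Mapping.lookup a k \<ge> 1" using k by (simp add: in_keys_iff)
  ultimately have ak: "Poly_Mapping.lookup a k = 1"
    and rest: "(\<Sum>j\<in>Poly_Mapping.keys a - {k}. Poly_Mapping.lookup a j) = 0" using S by linarith+
  have "\<forall>j\<in>Poly_Mapping.keys a - {k}. Poly_Mapping.lookup a j = 0" using rest by simp
  then have keys: "\<And>j. j \<noteq> k \<Longrightarrow> Poly_Mapping.lookup a j = 0" by (auto simp: in_keys_iff)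
  have "a = Poly_Mapping.single k 1"
    by (rule poly_mapping_eqI) (auto simp: lookup_single when_def ak keys)
  then show ?thesis using that k by blast
qed

theorem lemma2:
  fixes n :: nat
    and DD :: "((nat \<Rightarrow>\<^sub>0 nat) \<times> nat) set"
    and d1 d2 :: "(nat \<Rightarrow>\<^sub>0 nat) \<times> nat"
  assumes "finite DD"
    and "\<forall>d\<in>DD. valid_nabla n d"
    and "\<forall>d\<in>DD. on_cycle DD d \<longrightarrow> weight d = 0"
    and "d1 \<in> DD" and "on_cycle DD d1"
    and "d2 \<in> DD" and "\<not> on_cycle DD d2"
  shows "(\<forall>p :: ('a::field_char_0) mpoly. in_vars n p \<longrightarrow> commutator (nabla d1) (nabla d2) p = 0)
     \<or> (\<exists>(c::'a) b j. c \<noteq> 0 \<and> valid_nabla n (b, j)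
          \<and> (\<forall>p :: 'a mpoly. in_vars n p \<longrightarrow>
                commutator (nabla d1) (nabla d2) p = Poly_Mapping.map (\<lambda>x. c * x) (nabla (b, j) p))
          \<and> \<not> on_cycle (insert (b, j) DD) (b, j))"
proof -
  obtain a i where d1: "d1 = (a, i)" by (cases d1)
  obtain b j where d2: "d2 = (b, j)" by (cases d2)
  have w: "weight (a, i) = 0" using assms(3,4,5) d1 by blast
  obtain k where ak: "a = Poly_Mapping.single k 1" and kk: "k \<in> Poly_Mapping.keys a"
    using weight0_single[OF w] by blast
  have v1: "valid_nabla n (a, i)" and v2: "valid_nabla n (b, j)" using assms(2,4,6) d1 d2 by auto
  have i_rng: "i \<in> {1..n}" and ka: "Poly_Mapping.keys a \<subseteq> {1..n}" and ai: "Poly_Mapping.lookup a i = 0"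
    using v1 by (auto simp: valid_nabla_def)
  have j_rng: "j \<in> {1..n}" and kb: "Poly_Mapping.keys b \<subseteq> {1..n}" and bj: "Poly_Mapping.lookup b j = 0"
    using v2 by (auto simp: valid_nabla_def)
  have ki: "k \<noteq> i" using ai ak by (auto simp: lookup_single when_def)
  have k_rng: "k \<in> {1..n}" using kk ka by blast
  let ?E = "gamma_edges DD"
  have nc2: "(d2, d2) \<notin> ?E\<^sup>+" using assms(7) by (simp add: on_cycle_def)
  show ?thesis
  proof (cases "k = j")
    case True
    have e21: "(d2, d1) \<in> ?E" using assms(4,6) d1 d2 ak True by (simp add: gamma_iff)
    have bi: "Poly_Mapping.lookup b i = 0"
    proof (rule ccontr)
      assume "Poly_Mapping.lookup b i \<noteq> 0"
      then have "(d1, d2) \<in> ?E" using assms(4,6) d1 d2 by (simp add: gamma_iff)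
      then have "(d2, d2) \<in> ?E\<^sup>+" using e21 by (meson trancl.simps trancl_into_trancl2)
      then show False using nc2 by blast
    qed
    have ij: "i \<noteq> j" using ki True by simp
    define x where "x = (b, i)"
    define po where "po v = (if v = x then d1 else v)" for v
    define pi where "pi v = (if v = x then d2 else v)" for v
    have "(po x, pi x) \<in> ?E\<^sup>* \<and> (x = x \<longrightarrow> (po x, pi x) \<in> ?E\<^sup>+)"
      if cyc: "(x, x) \<in> (gamma_edges (insert x DD))\<^sup>+"
    proof (rule cycle_transfer[OF _ _ _ cyc])
      fix s t assume st: "(s, t) \<in> gamma_edges (insert x DD)"
      show "(po s, pi t) \<in> ?E\<^sup>*"
      proof -
        have "(po s, pi t) \<in> ?E"
          using st assms(4,6) bi unfolding po_def pi_def x_def d1 d2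
          by (auto simp: gamma_iff)
        then show ?thesis by blast
      qed
    next
      fix t assume st: "(x, t) \<in> gamma_edges (insert x DD)"
      have "(po x, pi t) \<in> ?E"
        using st assms(4,6) bi unfolding po_def pi_def x_def d1 d2
        by (auto simp: gamma_iff)
      then show "(po x, pi t) \<in> ?E\<^sup>+" by blast
    next
      fix v show "(pi v, po v) \<in> ?E\<^sup>*"
        using e21 unfolding po_def pi_def by auto
    qed
    then have nc: "\<not> on_cycle (insert x DD) x"
    proof (intro notI)
      assume H: "(x, x) \<in> (gamma_edges (insert x DD))\<^sup>+ \<Longrightarrow> (po x, pi x) \<in> ?E\<^sup>* \<and> (x = x \<longrightarrow> (po x, pi x) \<in> ?E\<^sup>+)"
        and oc: "on_cycle (insert x DD) x"
      then have "(d1, d2) \<in> ?E\<^sup>+" using oc unfolding on_cycle_def po_def pi_def by auto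
      then have "(d2, d2) \<in> ?E\<^sup>+" using e21 by (meson trancl_into_trancl2)
      then show False using nc2 by blast
    qed
    have vx: "valid_nabla n (b, i)" using i_rng kb bi by (simp add: valid_nabla_def)
    have eq: "commutator (nabla d1) (nabla d2) p = Poly_Mapping.map (\<lambda>x. (-1::'a) * x) (nabla (b, i) p)" for p :: "'a mpoly"
      unfolding d1 d2 ak True
      by (rule additive_ext[OF commutator_additive[OF nabla_additive nabla_additive]
            additive_comp[OF map_additive nabla_additive]])
         (rule comm_case4[OF ij bj bi])
    show ?thesis
      apply (rule disjI2)
      apply (rule exI[of _ "-1"], rule exI[of _ b], rule exI[of _ i])
      using vx eq nc unfolding x_def by simp
  next
    case False
    note kj = False
    show ?thesis
    proof (cases "Poly_Mapping.lookup b i = 0")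
      case True
      have "commutator (nabla d1) (nabla d2) p = (0::'a mpoly)" for p :: "'a mpoly"
        unfolding d1 d2 ak
        by (rule additive_ext[OF commutator_additive[OF nabla_additive nabla_additive] zero_additive])
           (rule comm_zero[OF kj True bj ki])
      then show ?thesis by blast
    next
      case False
      then have bi: "Poly_Mapping.lookup b i > 0" by simp
      have ij: "i \<noteq> j" using bi bj by auto
      have e12: "(d1, d2) \<in> ?E" using assms(4,6) d1 d2 bi by (simp add: gamma_iff)
      define B where "B = b - Poly_Mapping.single i 1 + Poly_Mapping.single k 1"
      have lB: "Poly_Mapping.lookup B y = Poly_Mapping.lookup b y - (if i = y then 1 else 0) + (if k = y then 1 else 0)" for y
        by (simp add: B_def lookup_add lookup_minus lookup_single when_def)
      define x where "x = (B, j)"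
      define po where "po v = (if v = x then d2 else v)" for v
      have "(po x, po x) \<in> ?E\<^sup>* \<and> (x = x \<longrightarrow> (po x, po x) \<in> ?E\<^sup>+)"
        if cyc: "(x, x) \<in> (gamma_edges (insert x DD))\<^sup>+"
      proof (rule cycle_transfer[OF _ _ _ cyc])
        fix s t assume st: "(s, t) \<in> gamma_edges (insert x DD)"
        show "(po s, po t) \<in> ?E\<^sup>*"
        proof (cases "t = x")
          case False
          then have "(po s, po t) \<in> ?E"
            using st assms(4,6) unfolding po_def x_def d1 d2
            by (auto simp: gamma_iff)
          then show ?thesis by blast
        next
          case tx: True
          have sx: "s \<noteq> x" using st tx bj ij kj by (auto simp: gamma_iff x_def lB)
          then have sD: "s \<in> DD" and pos: "Poly_Mapping.lookup B (snd s) > 0"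
            using st tx by (auto simp: gamma_iff x_def)
          show ?thesis
          proof (cases "snd s = k")
            case True
            have "(s, d1) \<in> ?E" using sD assms(4) d1 ak True by (simp add: gamma_iff)
            then have "(s, d2) \<in> ?E\<^sup>*" using e12 by (meson r_into_rtrancl rtrancl_into_rtrancl)
            then show ?thesis using sx tx unfolding po_def by simp
          next
            case False
            then have "Poly_Mapping.lookup b (snd s) > 0" using pos lB[of "snd s"] by (auto split: if_splits)
            then have "(s, d2) \<in> ?E" using sD assms(6) d2 by (simp add: gamma_iff)
            then show ?thesis using sx tx unfolding po_def by auto
          qed
        qed
      next
        fix t assume st: "(x, t) \<in> gamma_edges (insert x DD)"
        have "(po x, po t) \<in> ?E"
          using st assms(4,6) bj ij kj unfolding po_def x_def d1 d2
          by (auto simp: gamma_iff lB)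
        then show "(po x, po t) \<in> ?E\<^sup>+" by blast
      next
        fix v show "(po v, po v) \<in> ?E\<^sup>*" by simp
      qed
      then have nc: "\<not> on_cycle (insert x DD) x"
        using nc2 unfolding on_cycle_def po_def by auto
      have kB: "Poly_Mapping.keys B \<subseteq> {1..n}"
      proof
        fix y assume "y \<in> Poly_Mapping.keys B"
        then have "Poly_Mapping.lookup B y \<noteq> 0" by (simp add: in_keys_iff)
        then have "y = k \<or> Poly_Mapping.lookup b y \<noteq> 0" using lB[of y] by (auto split: if_splits)
        moreover have "Poly_Mapping.lookup b y \<noteq> 0 \<Longrightarrow> y \<in> {1..n}"
          using kb by (metis in_keys_iff subsetD)
        ultimately show "y \<in> {1..n}" using k_rng by blast
      qed
      have vx: "valid_nabla n (B, j)"
        using j_rng kB bj ij kj unfolding valid_nabla_def by (simp add: lB)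
      have eq: "commutator (nabla d1) (nabla d2) p = Poly_Mapping.map (\<lambda>x. (of_nat (Poly_Mapping.lookup b i)::'a) * x) (nabla (B, j) p)" for p :: "'a mpoly"
        unfolding d1 d2 ak B_def
        by (rule additive_ext[OF commutator_additive[OF nabla_additive nabla_additive]
              additive_comp[OF map_additive nabla_additive]])
           (rule comm_case3[OF kj ij ki bj bi])
      show ?thesis
        apply (rule disjI2)
        apply (rule exI[of _ "of_nat (Poly_Mapping.lookup b i)"], rule exI[of _ B], rule exI[of _ j])
        using vx eq nc bi unfolding x_def by simp
    qed
  qed
qed

end
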